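(* Let $A$ be the $K\times K$ matrix with diagonal entries $\frac{2K-1}{K}$ and all off-diagonal entries $-\frac1K$. Then $A$ is invertible, so for any $\gamma_1,\ldots,\gamma_K\in\mathbb{R}$ the system $A\,(\Gamma^c_1,\ldots,\Gamma^c_K)^T=b$, with $b_j=\gamma_j+\frac1K\sum_{l=1}^{n}\Gamma_l+\frac{\Gamma_\infty}{K}$, has a unique solution. For this solution and every $N\ge1$, the function $$\Psi_N(z)=\sum_{l=1}^{n}\Gamma_l\,\psi^{s*}_N(z,z_l)+\psi^*_{N,\infty}(z)+\sum_{j=1}^{K}\psi^*_{N,j}(z)$$ has circulation exactly $\gamma_j$ around $L_j$ for each $j=1,\ldots,K$.
   Context: Let $K\ge2$, circles $L_j=\{|z-c_j|=R_j\}$ with pairwise disjoint closed disks, $D$ the exterior of all closed disks, $T_j(z)=c_j+\frac{R_j^2}{\bar z-\bar c_j}$ the inversion in $L_j$ ($T_j(c_j)=\infty$, $T_j(\infty)=c_j$). Let $z_1,\ldots,z_n$ be finite points of $D$ with real circulations $\Gamma_1,\ldots,\Gamma_n$, and let $\Gamma_\infty\in\mathbb{R}$. For a starting point $p$ (a finite point of $D$, a center $c_j$, or $\infty$), the level-$M$ points of $p$ are the multiset $T_{i_1}\circ\cdots\circ T_{i_M}(p)$ over words with $i_k\ne i_{k+1}$ (level 0 is $p$). $\psi^s_N(z,z_l)=-\frac{1}{2\pi}\sum_{M=0}^{N}(-1)^M\sum_{\zeta\in\text{level }M\text{ of }z_l}\log|z-\zeta|$, $\psi^{s*}_N=\frac{(K-1)\psi^s_N+\psi^s_{N+1}}{K}$.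 $\psi_{N,\infty}(z)=-\frac{\Gamma_\infty}{2\pi}\sum_{M=1}^{N}(-1)^M\sum_{\zeta\in\text{level }M\text{ of }\infty}\log|z-\zeta|$, $\psi^*_{N,\infty}=\frac{(K-1)\psi_{N,\infty}+\psi_{N+1,\infty}}{K}$. $\psi_{N,j}(z)=-\frac{\Gamma^c_j}{2\pi}\sum_{M=0}^{N}(-1)^M\sum_{\zeta\in\text{level }M\text{ of }c_j,\ \zeta\ne\infty}\log|z-\zeta|$, $\psi^*_{N,j}=\frac{(K-1)\psi_{N,j}+\psi_{N+1,j}}{K}$. Circulation: for a finite sum $\psi(z)=-\frac{1}{2\pi}\sum_k\Gamma_k\log|z-\zeta_k|$ with no $\zeta_k$ on $L_j$, the circulation around $L_j$ is the sum of $\Gamma_k$ over $\zeta_k$ in the open disk bounded by $L_j$ (equivalently $-\oint_{L_j}\partial\psi/\partial n\,ds$, counterclockwise, outward normal). *)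

theory Defs
  imports Complex_Main "HOL-Library.Multiset"
begin

datatype epoint = Fin complex | Infty

definition inv_circ :: "complex \<Rightarrow> real \<Rightarrow> epoint \<Rightarrow> epoint" where
  "inv_circ c r p = (case p of
      Infty \<Rightarrow> Fin c
    | Fin z \<Rightarrow> (if z = c then Infty else Fin (c + complex_of_real (r ^ 2) / cnj (z - c))))"

definition words :: "nat \<Rightarrow> nat \<Rightarrow> nat list set" where
  "words K M = {w. length w = M \<and> set w \<subseteq> {1..K} \<and> (\<forall>k. Suc k < M \<longrightarrow> w ! k \<noteq> w ! Suc k)}"

definition level :: "(nat \<Rightarrow> complex) \<Rightarrow> (nat \<Rightarrow> real) \<Rightarrow> nat \<Rightarrow> nat \<Rightarrow> epoint \<Rightarrow> epoint multiset" where
  "level c R K M p = image_mset (\<lambda>w. foldr (\<lambda>i q. inv_circ (c i) (R i) q) w p) (mset_set (words K M))"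

definition logsum :: "complex \<Rightarrow> epoint multiset \<Rightarrow> real" where
  "logsum z Z = (\<Sum>\<zeta>\<in>#Z. (case \<zeta> of Fin a \<Rightarrow> ln (cmod (z - a)) | Infty \<Rightarrow> 0))"

definition psi_s :: "(nat \<Rightarrow> complex) \<Rightarrow> (nat \<Rightarrow> real) \<Rightarrow> nat \<Rightarrow> nat \<Rightarrow> complex \<Rightarrow> complex \<Rightarrow> real" where
  "psi_s c R K N zl z = - (1 / (2 * pi)) * (\<Sum>M\<le>N. (-1) ^ M * logsum z (level c R K M (Fin zl)))"

definition psi_s_star :: "(nat \<Rightarrow> complex) \<Rightarrow> (nat \<Rightarrow> real) \<Rightarrow> nat \<Rightarrow> nat \<Rightarrow> complex \<Rightarrow> complex \<Rightarrow> real" where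
  "psi_s_star c R K N zl z = ((real K - 1) * psi_s c R K N zl z + psi_s c R K (Suc N) zl z) / real K"

definition psi_inf :: "(nat \<Rightarrow> complex) \<Rightarrow> (nat \<Rightarrow> real) \<Rightarrow> nat \<Rightarrow> real \<Rightarrow> nat \<Rightarrow> complex \<Rightarrow> real" where
  "psi_inf c R K Ginf N z = - (Ginf / (2 * pi)) * (\<Sum>M\<in>{1..N}. (-1) ^ M * logsum z (level c R K M Infty))"

definition psi_inf_star :: "(nat \<Rightarrow> complex) \<Rightarrow> (nat \<Rightarrow> real) \<Rightarrow> nat \<Rightarrow> real \<Rightarrow> nat \<Rightarrow> complex \<Rightarrow> real" where
  "psi_inf_star c R K Ginf N z = ((real K - 1) * psi_inf c R K Ginf N z + psi_inf c R K Ginf (Suc N) z) / real K"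

definition psi_c :: "(nat \<Rightarrow> complex) \<Rightarrow> (nat \<Rightarrow> real) \<Rightarrow> nat \<Rightarrow> real \<Rightarrow> nat \<Rightarrow> nat \<Rightarrow> complex \<Rightarrow> real" where
  "psi_c c R K Gcj j N z = - (Gcj / (2 * pi)) * (\<Sum>M\<le>N. (-1) ^ M * logsum z (level c R K M (Fin (c j))))"

definition psi_c_star :: "(nat \<Rightarrow> complex) \<Rightarrow> (nat \<Rightarrow> real) \<Rightarrow> nat \<Rightarrow> real \<Rightarrow> nat \<Rightarrow> nat \<Rightarrow> complex \<Rightarrow> real" where
  "psi_c_star c R K Gcj j N z = ((real K - 1) * psi_c c R K Gcj j N z + psi_c c R K Gcj j (Suc N) z) / real K"

definition Psi :: "(nat \<Rightarrow> complex) \<Rightarrow> (nat \<Rightarrow> real) \<Rightarrow> nat \<Rightarrow> nat \<Rightarrow> (nat \<Rightarrow> complex) \<Rightarrow> (nat \<Rightarrow> real)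
    \<Rightarrow> real \<Rightarrow> (nat \<Rightarrow> real) \<Rightarrow> nat \<Rightarrow> complex \<Rightarrow> real" where
  "Psi c R K n zs G Ginf Gc N z =
     (\<Sum>l\<in>{1..n}. G l * psi_s_star c R K N (zs l) z) + psi_inf_star c R K Ginf N z
     + (\<Sum>j\<in>{1..K}. psi_c_star c R K (Gc j) j N z)"

text \<open>Circulation: f is a finite sum -1/(2 pi) * sum_k Gamma_k log|z - zeta_k| (given by a multiset of
  (Gamma_k, zeta_k)) with no zeta_k on the circle |z - cj| = Rj, and the circulation is the sum
  of the Gamma_k with zeta_k in the open disk.\<close>
definition has_circulation :: "(complex \<Rightarrow> real) \<Rightarrow> complex \<Rightarrow> real \<Rightarrow> real \<Rightarrow> bool" where
  "has_circulation f cj Rj g \<longleftrightarrow>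
     (\<exists>Z :: (real \<times> complex) multiset.
        (\<forall>z. f z = - (1 / (2 * pi)) * (\<Sum>(w, \<zeta>)\<in>#Z. w * ln (cmod (z - \<zeta>))))
      \<and> (\<forall>(w, \<zeta>)\<in>#Z. cmod (\<zeta> - cj) \<noteq> Rj)
      \<and> (\<Sum>(w, \<zeta>)\<in>#filter_mset (\<lambda>(w, \<zeta>). cmod (\<zeta> - cj) < Rj) Z. w) = g)"

definition Amat :: "nat \<Rightarrow> nat \<Rightarrow> nat \<Rightarrow> real" where
  "Amat K i j = (if i = j then (2 * real K - 1) / real K else - 1 / real K)"

end

theory Submission
  imports Defs
begin

lemma hc_eq: "has_circulation f c r g \<Longrightarrow> (\<And>z. f z = f' z) \<Longrightarrow> g = g' \<Longrightarrow> has_circulation f' c r g'"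
  unfolding has_circulation_def by metis

lemma hc_zero: "has_circulation (\<lambda>z. 0) c r 0"
  unfolding has_circulation_def by (rule exI[of _ "{#}"]) simp

lemma hc_add:
  assumes "has_circulation f c r g" "has_circulation h c r g'"
  shows "has_circulation (\<lambda>z. f z + h z) c r (g + g')"
proof -
  from assms obtain Z1 Z2 where Z1: "\<forall>z. f z = - (1 / (2 * pi)) * (\<Sum>(w, \<zeta>)\<in>#Z1. w * ln (cmod (z - \<zeta>)))"
    "\<forall>(w, \<zeta>)\<in>#Z1. cmod (\<zeta> - c) \<noteq> r"
    "(\<Sum>(w, \<zeta>)\<in>#filter_mset (\<lambda>(w, \<zeta>). cmod (\<zeta> - c) < r) Z1. w) = g"
  and Z2: "\<forall>z. h z = - (1 / (2 * pi)) * (\<Sum>(w, \<zeta>)\<in>#Z2. w * ln (cmod (z - \<zeta>)))"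
    "\<forall>(w, \<zeta>)\<in>#Z2. cmod (\<zeta> - c) \<noteq> r"
    "(\<Sum>(w, \<zeta>)\<in>#filter_mset (\<lambda>(w, \<zeta>). cmod (\<zeta> - c) < r) Z2. w) = g'"
    unfolding has_circulation_def by blast
  show ?thesis unfolding has_circulation_def
    apply (rule exI[of _ "Z1 + Z2"])
    using Z1 Z2 by (auto simp: algebra_simps)
qed

lemma scale_sum1: "(\<Sum>(w, \<zeta>)\<in># image_mset (\<lambda>(w,\<zeta>). ((a::real)*w, \<zeta>)) Z. w * F \<zeta>) = a * (\<Sum>(w, \<zeta>)\<in>#Z. w * F \<zeta>)"
  by (induction Z) (auto simp: algebra_simps)

lemma scale_sum2: "(\<Sum>(w, \<zeta>)\<in># filter_mset (\<lambda>(w, \<zeta>). P \<zeta>) (image_mset (\<lambda>(w,\<zeta>). ((a::real)*w, \<zeta>)) Z). w) = a * (\<Sum>(w, \<zeta>)\<in>#filter_mset (\<lambda>(w, \<zeta>). P \<zeta>) Z. w)"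
  by (induction Z) (auto simp: algebra_simps)

lemma hc_scale:
  assumes "has_circulation f c r g"
  shows "has_circulation (\<lambda>z. a * f z) c r (a * g)"
proof -
  from assms obtain Z1 where Z1: "\<forall>z. f z = - (1 / (2 * pi)) * (\<Sum>(w, \<zeta>)\<in>#Z1. w * ln (cmod (z - \<zeta>)))"
    "\<forall>(w, \<zeta>)\<in>#Z1. cmod (\<zeta> - c) \<noteq> r"
    "(\<Sum>(w, \<zeta>)\<in>#filter_mset (\<lambda>(w, \<zeta>). cmod (\<zeta> - c) < r) Z1. w) = g"
    unfolding has_circulation_def by blast
  show ?thesis unfolding has_circulation_def
    apply (rule exI[of _ "image_mset (\<lambda>(w,\<zeta>). (a*w, \<zeta>)) Z1"])
    apply (intro conjI)
    subgoal using Z1(1) by (simp only: scale_sum1) simp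
    subgoal using Z1(2) by auto
    subgoal using Z1(3) by (simp only: scale_sum2)
    done
qed

lemma hc_sum:
  assumes "finite A" "\<And>i. i \<in> A \<Longrightarrow> has_circulation (f i) c r (g i)"
  shows "has_circulation (\<lambda>z. \<Sum>i\<in>A. f i z) c r (\<Sum>i\<in>A. g i)"
  using assms
proof (induction A rule: finite_induct)
  case empty
  then show ?case using hc_zero by simp
next
  case (insert x F)
  then show ?case using hc_add[of "f x" c r "g x" "\<lambda>z. \<Sum>i\<in>F. f i z"] by simp
qed

definition fpt :: "epoint \<Rightarrow> complex" where "fpt p = (case p of Fin a \<Rightarrow> a | Infty \<Rightarrow> 0)"

lemma ls1: "(\<Sum>(w, \<zeta>)\<in># image_mset (\<lambda>p. (1::real, fpt p)) (filter_mset (\<lambda>p. p \<noteq> Infty) P). w * ln (cmod (z - \<zeta>))) = logsum z P"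
  by (induction P) (auto simp: logsum_def fpt_def split: epoint.splits)

lemma ls2: "(\<Sum>(w, \<zeta>)\<in># filter_mset (\<lambda>(w, \<zeta>). cmod (\<zeta> - c) < r) (image_mset (\<lambda>p. (1::real, fpt p)) (filter_mset (\<lambda>p. p \<noteq> Infty) P)). w)
   = real (size (filter_mset (\<lambda>p. case p of Fin a \<Rightarrow> cmod (a - c) < r | Infty \<Rightarrow> False) P))"
  by (induction P) (auto simp: fpt_def split: epoint.splits)

lemma hc_logsum:
  assumes "\<forall>p\<in>#P. (case p of Fin a \<Rightarrow> cmod (a - c) \<noteq> r | Infty \<Rightarrow> True)"
  shows "has_circulation (\<lambda>z. - (1/(2*pi)) * logsum z P) c r
           (real (size (filter_mset (\<lambda>p. case p of Fin a \<Rightarrow> cmod (a - c) < r | Infty \<Rightarrow> False) P)))"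
  unfolding has_circulation_def
  apply (rule exI[of _ "image_mset (\<lambda>p. (1::real, fpt p)) (filter_mset (\<lambda>p. p \<noteq> Infty) P)"])
  apply (intro conjI)
  subgoal by (simp only: ls1) simp
  subgoal using assms by (auto simp: fpt_def split: epoint.splits)
  subgoal by (simp only: ls2)
  done


lemma words_len: "w \<in> words K M \<Longrightarrow> length w = M"
  by (simp add: words_def)

lemma words_set: "w \<in> words K M \<Longrightarrow> set w \<subseteq> {1..K}"
  by (simp add: words_def)

lemma words_0: "words K 0 = {[]}"
  by (auto simp: words_def)

lemma words_finite: "finite (words K M)"
proof -
  have "words K M \<subseteq> {w. set w \<subseteq> {1..K} \<and> length w = M}" by (auto simp: words_def)
  moreover have "finite {w. set w \<subseteq> {1..K} \<and> length w = M}"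
    by (rule finite_lists_length_eq) simp
  ultimately show ?thesis by (rule finite_subset)
qed

lemma words_Cons: "(i # w \<in> words K (Suc M)) \<longleftrightarrow> i \<in> {1..K} \<and> w \<in> words K M \<and> (w \<noteq> [] \<longrightarrow> hd w \<noteq> i)"
proof
  assume a: "i # w \<in> words K (Suc M)"
  hence l: "length w = M" and s: "i \<in> {1..K}" "set w \<subseteq> {1..K}"
    and adj: "\<And>k. Suc k < Suc M \<Longrightarrow> (i#w) ! k \<noteq> (i#w) ! Suc k" by (auto simp: words_def)
  have "\<forall>k. Suc k < M \<longrightarrow> w ! k \<noteq> w ! Suc k"
  proof (intro allI impI)
    fix k assume "Suc k < M"
    from adj[of "Suc k"] this show "w ! k \<noteq> w ! Suc k" by simp
  qed
  hence "w \<in> words K M" using l s by (simp add: words_def)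
  moreover have "w \<noteq> [] \<longrightarrow> hd w \<noteq> i"
  proof
    assume "w \<noteq> []"
    hence "0 < M" using l by auto
    from adj[of 0] this show "hd w \<noteq> i" using \<open>w \<noteq> []\<close> by (auto simp: hd_conv_nth)
  qed
  ultimately show "i \<in> {1..K} \<and> w \<in> words K M \<and> (w \<noteq> [] \<longrightarrow> hd w \<noteq> i)" using s by blast
next
  assume a: "i \<in> {1..K} \<and> w \<in> words K M \<and> (w \<noteq> [] \<longrightarrow> hd w \<noteq> i)"
  hence l: "length w = M" and s: "set w \<subseteq> {1..K}" and adj: "\<And>k. Suc k < M \<Longrightarrow> w ! k \<noteq> w ! Suc k"
    by (auto simp: words_def)
  have "\<forall>k. Suc k < Suc M \<longrightarrow> (i#w) ! k \<noteq> (i#w) ! Suc k"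
  proof (intro allI impI)
    fix k assume k: "Suc k < Suc M"
    show "(i#w) ! k \<noteq> (i#w) ! Suc k"
    proof (cases k)
      case 0
      then have "w \<noteq> []" using k l by auto
      then show ?thesis using a 0 by (auto simp: hd_conv_nth)
    next
      case (Suc k')
      then show ?thesis using adj[of k'] k by simp
    qed
  qed
  then show "i # w \<in> words K (Suc M)" using a l s by (simp add: words_def)
qed

lemma words_hd: "w \<in> words K M \<Longrightarrow> w \<noteq> [] \<Longrightarrow> hd w \<in> {1..K}"
  using words_set hd_in_set by blast

lemma words_last: "w \<in> words K M \<Longrightarrow> w \<noteq> [] \<Longrightarrow> last w \<in> {1..K}"
  using words_set last_in_set by blast

lemma words_butlast: "w \<in> words K M \<Longrightarrow> butlast w \<in> words K (M - 1)"
  unfolding words_def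
  by (auto simp: nth_butlast dest: in_set_butlastD)

lemma words_hd_set: "k \<in> {1..K} \<Longrightarrow> {w \<in> words K (Suc M). hd w = k} = (\<lambda>w. k # w) ` {w \<in> words K M. w = [] \<or> hd w \<noteq> k}"
proof (intro equalityI subsetI)
  fix x assume x: "x \<in> {w \<in> words K (Suc M). hd w = k}"
  then obtain i w where xe: "x = i # w" using words_len by (cases x) fastforce+
  with x show "x \<in> (\<lambda>w. k # w) ` {w \<in> words K M. w = [] \<or> hd w \<noteq> k}"
    by (auto simp: words_Cons)
next
  fix x assume "k \<in> {1..K}" "x \<in> (\<lambda>w. k # w) ` {w \<in> words K M. w = [] \<or> hd w \<noteq> k}"
  then obtain w where "x = k # w" "w \<in> words K M" "w = [] \<or> hd w \<noteq> k" by auto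
  moreover assume "k \<in> {1..K}"
  ultimately show "x \<in> {w \<in> words K (Suc M). hd w = k}" by (auto simp: words_Cons)
qed


lemma words_count: "k \<in> {1..K} \<Longrightarrow> card {w \<in> words K (Suc M). hd w = k} = (K - 1) ^ M"
proof (induction M arbitrary: k)
  case 0
  have "{w \<in> words K 0. w = [] \<or> hd w \<noteq> k} = {[]}" by (auto simp: words_0)
  then show ?case using words_hd_set[OF 0] by simp
next
  case (Suc m)
  have e: "{w \<in> words K (Suc m). w = [] \<or> hd w \<noteq> k} = (\<Union>i\<in>{1..K}-{k}. {w \<in> words K (Suc m). hd w = i})"
    using words_hd words_len by fastforce
  have "card (\<Union>i\<in>{1..K}-{k}. {w \<in> words K (Suc m). hd w = i}) = (\<Sum>i\<in>{1..K}-{k}. card {w \<in> words K (Suc m). hd w = i})"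
    by (rule card_UN_disjoint) (auto simp: words_finite)
  also have "\<dots> = (\<Sum>i\<in>{1..K}-{k}. (K - 1) ^ m)"
    using Suc.IH by (intro sum.cong) auto
  also have "\<dots> = (K - 1) ^ Suc m" using Suc.prems by simp
  finally have "card {w \<in> words K (Suc m). w = [] \<or> hd w \<noteq> k} = (K - 1) ^ Suc m" using e by simp
  moreover have "inj_on (\<lambda>w. k # w) X" for X by (simp add: inj_on_def)
  ultimately show ?case using words_hd_set[OF Suc.prems, of "Suc m"] by (simp add: card_image)
qed


locale geom =
  fixes K :: nat and c :: "nat \<Rightarrow> complex" and R :: "nat \<Rightarrow> real"
  assumes K2: "K \<ge> 2"
    and Rpos: "\<forall>j\<in>{1..K}. R j > 0"
    and disj: "\<forall>i\<in>{1..K}. \<forall>j\<in>{1..K}. i \<noteq> j \<longrightarrow> cmod (c i - c j) > R i + R j"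
begin

definition inside :: "nat \<Rightarrow> epoint \<Rightarrow> bool" where
  "inside k p = (case p of Fin a \<Rightarrow> cmod (a - c k) < R k | Infty \<Rightarrow> False)"
definition good :: "nat \<Rightarrow> epoint \<Rightarrow> bool" where
  "good k p = (case p of Fin a \<Rightarrow> cmod (a - c k) > R k | Infty \<Rightarrow> True)"
definition regular :: "epoint \<Rightarrow> bool" where
  "regular p = (\<forall>k\<in>{1..K}. inside k p \<or> good k p)"
definition fw :: "nat list \<Rightarrow> epoint \<Rightarrow> epoint" where
  "fw w p = foldr (\<lambda>i q. inv_circ (c i) (R i) q) w p"

lemma good_not_inside: "good k p \<Longrightarrow> \<not> inside k p"
  by (auto simp: good_def inside_def split: epoint.splits)

lemma inside_good:
  assumes "i \<in> {1..K}" "k \<in> {1..K}" "k \<noteq> i" "inside i p"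
  shows "good k p"
proof -
  obtain a where p: "p = Fin a" and a: "cmod (a - c i) < R i" using assms(4) by (auto simp: inside_def split: epoint.splits)
  have d: "cmod (c i - c k) > R i + R k" using disj assms by auto
  have "cmod (c i - c k) \<le> cmod (c i - a) + cmod (a - c k)"
    using norm_triangle_ineq[of "c i - a" "a - c k"] by simp
  moreover have "cmod (c i - a) = cmod (a - c i)" by (simp add: norm_minus_commute)
  ultimately have "cmod (a - c k) > R k" using a d by linarith
  then show ?thesis using p by (simp add: good_def)
qed

lemma good_inv:
  assumes "i \<in> {1..K}" "good i p"
  shows "inside i (inv_circ (c i) (R i) p)"
proof (cases p)
  case Infty
  then show ?thesis using Rpos assms by (simp add: inv_circ_def inside_def)
next
  case (Fin z)
  have r: "R i > 0" using Rpos assms by auto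
  have d: "cmod (z - c i) > R i" using assms Fin by (simp add: good_def)
  hence ne: "z \<noteq> c i" using r by auto
  have "cmod (complex_of_real (R i ^ 2) / cnj (z - c i)) = R i ^ 2 / cmod (z - c i)"
  proof -
    have "cmod (cnj (z - c i)) = cmod (z - c i)" by (rule complex_mod_cnj)
    then show ?thesis by (simp add: norm_divide norm_power del: complex_cnj_diff)
  qed
  also have "\<dots> < R i" using d r by (simp add: divide_less_eq power2_eq_square)
  finally show ?thesis using Fin ne by (simp add: inv_circ_def inside_def)
qed

lemma fw_main:
  "w \<in> words K (length w) \<Longrightarrow> w \<noteq> [] \<Longrightarrow> good (last w) p \<Longrightarrow>
   inside (hd w) (fw w p) \<and> (\<forall>k\<in>{1..K}. k \<noteq> hd w \<longrightarrow> good k (fw w p))"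
proof (induction w)
  case Nil
  then show ?case by simp
next
  case (Cons i w)
  have i: "i \<in> {1..K}" and w: "w \<in> words K (length w)" and hw: "w \<noteq> [] \<longrightarrow> hd w \<noteq> i"
    using Cons.prems(1) words_Cons[of i w K "length w"] by auto
  have g: "good i (fw w p)"
  proof (cases "w = []")
    case True
    then show ?thesis using Cons.prems by (simp add: fw_def)
  next
    case False
    with Cons.IH w Cons.prems have "inside (hd w) (fw w p)" by simp
    then show ?thesis using inside_good[of "hd w" i] words_hd[OF w False] hw False i by auto
  qed
  have "inside i (fw (i # w) p)" using good_inv[OF i g] by (simp add: fw_def)
  then show ?case using inside_good[OF i] i by simp
qed

lemma regular_Infty: "regular Infty" by (simp add: regular_def good_def)

lemma fw_regular_good:
  assumes "w \<in> words K M" "w \<noteq> []" "good (last w) p" "k \<in> {1..K}"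
  shows "regular (fw w p)" "inside k (fw w p) \<longleftrightarrow> hd w = k"
proof -
  have w: "w \<in> words K (length w)" using assms words_len by metis
  note m = fw_main[OF w assms(2,3)]
  show "regular (fw w p)" using m by (auto simp: regular_def)
  show "inside k (fw w p) \<longleftrightarrow> hd w = k"
    using m good_not_inside assms(4) by metis
qed


lemma level_eq: "level c R K M p0 = image_mset (\<lambda>w. fw w p0) (mset_set (words K M))"
  by (simp add: level_def fw_def)

lemma level_count:
  "size (filter_mset (\<lambda>p. case p of Fin a \<Rightarrow> cmod (a - c k) < R k | Infty \<Rightarrow> False) (level c R K M p0))
   = card {w \<in> words K M. inside k (fw w p0)}"
proof -
  have "(\<lambda>p. case p of Fin a \<Rightarrow> cmod (a - c k) < R k | Infty \<Rightarrow> False) = inside k"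
    by (rule ext) (simp add: inside_def)
  then show ?thesis
    by (simp add: level_eq filter_mset_image_mset words_finite)
qed

lemma level_ok:
  assumes "k \<in> {1..K}" "\<forall>w\<in>words K M. regular (fw w p0)"
  shows "\<forall>p\<in>#level c R K M p0. (case p of Fin a \<Rightarrow> cmod (a - c k) \<noteq> R k | Infty \<Rightarrow> True)"
proof
  fix p assume "p \<in># level c R K M p0"
  then obtain w where "w \<in> words K M" "p = fw w p0" by (auto simp: level_eq words_finite)
  then have "regular p" using assms by auto
  then have "inside k p \<or> good k p" using assms(1) by (simp add: regular_def)
  then show "(case p of Fin a \<Rightarrow> cmod (a - c k) \<noteq> R k | Infty \<Rightarrow> True)"
    by (auto simp: inside_def good_def split: epoint.splits)
qed

lemma hc_series:
  assumes "finite A" "k \<in> {1..K}" "\<forall>M\<in>A. \<forall>w\<in>words K M. regular (fw w p0)"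
  shows "has_circulation (\<lambda>z. \<Sum>M\<in>A. a M * (- (1/(2*pi)) * logsum z (level c R K M p0))) (c k) (R k)
           (\<Sum>M\<in>A. a M * real (card {w \<in> words K M. inside k (fw w p0)}))"
proof (rule hc_sum[OF assms(1)])
  fix M assume M: "M \<in> A"
  have "has_circulation (\<lambda>z. - (1/(2*pi)) * logsum z (level c R K M p0)) (c k) (R k)
           (real (card {w \<in> words K M. inside k (fw w p0)}))"
    using hc_logsum[OF level_ok[OF assms(2)]] level_count M assms(3) by metis
  then show "has_circulation (\<lambda>z. a M * (- (1/(2*pi)) * logsum z (level c R K M p0))) (c k) (R k)
           (a M * real (card {w \<in> words K M. inside k (fw w p0)}))"
    by (rule hc_scale)
qed

lemma fw_goodall:
  assumes "\<forall>i\<in>{1..K}. good i p0" "w \<in> words K M" "k \<in> {1..K}"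
  shows "regular (fw w p0) \<and> (inside k (fw w p0) \<longleftrightarrow> (M \<noteq> 0 \<and> hd w = k))"
proof (cases "w = []")
  case True
  then have "M = 0" using assms words_len by fastforce
  then show ?thesis using True assms good_not_inside by (auto simp: fw_def regular_def)
next
  case False
  then have "M \<noteq> 0" using assms words_len by fastforce
  moreover have "good (last w) p0" using assms words_last[OF assms(2) False] by auto
  ultimately show ?thesis using fw_regular_good[OF assms(2) False _ assms(3)] by auto
qed

lemma cnt_goodall:
  assumes "\<forall>i\<in>{1..K}. good i p0" "k \<in> {1..K}"
  shows "card {w \<in> words K M. inside k (fw w p0)} = (if M = 0 then 0 else (K - 1) ^ (M - 1))"
proof (cases M)
  case 0
  have e: "{w \<in> words K 0. inside k (fw w p0)} = {}" using fw_goodall[OF assms(1) _ assms(2), of _ 0] by auto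
  show ?thesis unfolding 0 e by simp
next
  case (Suc m)
  have "{w \<in> words K M. inside k (fw w p0)} = {w \<in> words K (Suc m). hd w = k}"
    using fw_goodall[OF assms(1) _ assms(2)] Suc by auto
  then show ?thesis using words_count[OF assms(2)] Suc by simp
qed

lemma cj_props:
  assumes "j \<in> {1..K}"
  shows "inside j (Fin (c j))" "\<forall>i\<in>{1..K}. i \<noteq> j \<longrightarrow> good i (Fin (c j))" "regular (Fin (c j))"
proof -
  show i: "inside j (Fin (c j))" using Rpos assms by (simp add: inside_def)
  show g: "\<forall>i\<in>{1..K}. i \<noteq> j \<longrightarrow> good i (Fin (c j))" using inside_good[OF assms _ _ i] by auto
  show "regular (Fin (c j))" using i g by (auto simp: regular_def)
qed

lemma fw_cj:
  assumes "j \<in> {1..K}" "w \<in> words K M" "k \<in> {1..K}"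
  shows "regular (fw w (Fin (c j))) \<and> (inside k (fw w (Fin (c j))) \<longleftrightarrow>
     (if M = 0 then k = j else if M = 1 then hd w = k \<and> hd w \<noteq> j else hd w = k))"
proof (cases "w = []")
  case True
  then have "M = 0" using assms words_len by fastforce
  then show ?thesis using True cj_props[OF assms(1)] assms good_not_inside by (auto simp: fw_def)
next
  case False
  then have M0: "M \<noteq> 0" using assms words_len by fastforce
  show ?thesis
  proof (cases "last w = j")
    case False
    then have "good (last w) (Fin (c j))" using cj_props(2)[OF assms(1)] words_last[OF assms(2) \<open>w \<noteq> []\<close>] by auto
    moreover have "M = 1 \<Longrightarrow> hd w = last w" using assms(2) words_len[OF assms(2)] \<open>w \<noteq> []\<close>
      by (cases w) auto
    ultimately show ?thesis using fw_regular_good[OF assms(2) \<open>w \<noteq> []\<close> _ assms(3)] M0 False by auto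
  next
    case True
    have we: "w = butlast w @ [j]" using True \<open>w \<noteq> []\<close> by (metis append_butlast_last_id)
    have inv: "inv_circ (c j) (R j) (Fin (c j)) = Infty" by (simp add: inv_circ_def)
    have fe: "fw w (Fin (c j)) = fw (butlast w) Infty"
      by (subst we) (simp add: fw_def inv)
    show ?thesis
    proof (cases "butlast w = []")
      case True
      then have "M = 1" using words_len[OF assms(2)] \<open>w \<noteq> []\<close> by (cases w) (auto split: if_splits)
      moreover have "hd w = j" using \<open>last w = j\<close> True we by (cases w) auto
      ultimately show ?thesis using fe True regular_Infty by (simp add: fw_def inside_def)
    next
      case bF: False
      have bw: "butlast w \<in> words K (M - 1)" by (rule words_butlast[OF assms(2)])
      have "length (butlast w) \<noteq> 0" using bF by (metis length_0_conv)
      then have "M \<noteq> 1" using words_len[OF assms(2)] by auto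
      moreover have "hd (butlast w) = hd w" using bF by (cases w) auto
      moreover have "good (last (butlast w)) Infty" by (simp add: good_def)
      ultimately show ?thesis using fw_regular_good[OF bw bF _ assms(3)] fe M0 by auto
    qed
  qed
qed

lemma cnt_cj:
  assumes "j \<in> {1..K}" "k \<in> {1..K}"
  shows "card {w \<in> words K M. inside k (fw w (Fin (c j)))} =
     (if M = 0 then (if k = j then 1 else 0) else if M = 1 then (if k = j then 0 else 1) else (K - 1) ^ (M - 1))"
proof -
  consider "M = 0" | "M = 1" | m where "M = Suc m" "m \<noteq> 0" by (cases M) auto
  then show ?thesis
  proof cases
    case 1
    have e: "{w \<in> words K 0. inside k (fw w (Fin (c j)))} = (if k = j then {[]} else {})"
      using fw_cj[OF assms(1) _ assms(2), of _ 0] words_0 by auto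
    show ?thesis unfolding 1 e by simp
  next
    case 2
    then have "{w \<in> words K M. inside k (fw w (Fin (c j)))} = {w \<in> words K (Suc 0). hd w = k \<and> hd w \<noteq> j}"
      using fw_cj[OF assms(1) _ assms(2)] by auto
    moreover have "{w \<in> words K (Suc 0). hd w = k \<and> hd w \<noteq> j} = (if k = j then {} else {w \<in> words K (Suc 0). hd w = k})"
      by auto
    ultimately show ?thesis using words_count[OF assms(2), of 0] 2 by simp
  next
    case 3
    then have "{w \<in> words K M. inside k (fw w (Fin (c j)))} = {w \<in> words K (Suc m). hd w = k}"
      using fw_cj[OF assms(1) _ assms(2)] by auto
    then show ?thesis using words_count[OF assms(2)] 3 by simp
  qed
qed


definition T :: "nat \<Rightarrow> real" where "T M = (if M = 0 then 0 else (-1)^M * (real K - 1)^(M-1))"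
definition S :: "nat \<Rightarrow> real" where "S N = (\<Sum>M\<le>N. T M)"

lemma KS: "real K * S N = (-1)^N * (real K - 1)^N - 1"
proof (induction N)
  case 0
  then show ?case by (simp add: S_def T_def)
next
  case (Suc N)
  have "real K * S (Suc N) = real K * S N + real K * T (Suc N)" by (simp add: S_def algebra_simps)
  also have "\<dots> = (-1)^N * (real K - 1)^N - 1 - real K * ((-1)^N * (real K - 1)^N)"
    using Suc by (simp add: T_def)
  also have "\<dots> = (-1)^(Suc N) * (real K - 1)^(Suc N) - 1" by (simp add: algebra_simps)
  finally show ?case .
qed

lemma Sstar: "((real K - 1) * S N + S (Suc N)) / real K = - 1 / real K"
proof -
  have "(real K - 1) * S N + S (Suc N) = real K * S N + T (Suc N)" by (simp add: S_def algebra_simps)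
  also have "\<dots> = -1" by (simp add: KS T_def)
  finally show ?thesis by simp
qed

lemma S_from1: "S N = (\<Sum>M\<in>{1..N}. T M)"
proof -
  have "{..N} = insert 0 {1..N}" by auto
  then show ?thesis by (simp add: S_def T_def)
qed

lemma sum_le1: "1 \<le> (N::nat) \<Longrightarrow> (\<Sum>M\<le>N. (if M \<le> 1 then d else 0::real)) = 2 * d"
proof (induction N)
  case 0
  then show ?case by simp
next
  case (Suc n)
  show ?case
  proof (cases "n = 0")
    case True
    then show ?thesis by simp
  next
    case False
    then show ?thesis using Suc by simp
  qed
qed

lemma K1: "K \<ge> 1" using K2 by simp
lemma rK: "real (K - Suc 0) = real K - 1" using K1 by (simp add: of_nat_diff)

lemma term_c:
  assumes "j \<in> {1..K}" "k \<in> {1..K}"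
  shows "(-1)^M * real (card {w \<in> words K M. inside k (fw w (Fin (c j)))}) = T M + (if M \<le> 1 then (if k = j then 1 else 0) else 0)"
proof -
  consider "M = 0" | "M = 1" | "M \<ge> 2" by linarith
  then show ?thesis
    by cases (auto simp: cnt_cj[OF assms] T_def rK)
qed

lemma star_hc:
  assumes "\<And>N'. has_circulation (f N') ck rk (g N')"
    and "\<And>z. h z = ((real K - 1) * f N z + f (Suc N) z) / real K"
  shows "has_circulation h ck rk (((real K - 1) * g N + g (Suc N)) / real K)"
proof -
  have "has_circulation (\<lambda>z. ((real K - 1) / real K) * f N z + (1 / real K) * f (Suc N) z) ck rk
        (((real K - 1) / real K) * g N + (1 / real K) * g (Suc N))"
    by (intro hc_add hc_scale assms(1))
  then show ?thesis by (rule hc_eq) (simp_all add: assms(2) add_divide_distrib)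
qed

lemma hc_s:
  assumes "\<forall>i\<in>{1..K}. good i (Fin zl)" "k \<in> {1..K}"
  shows "has_circulation (psi_s_star c R K N zl) (c k) (R k) (-1 / real K)"
proof -
  have base: "has_circulation (psi_s c R K N' zl) (c k) (R k) (S N')" for N'
  proof -
    have "has_circulation (\<lambda>z. \<Sum>M\<in>{..N'}. (-1)^M * (- (1/(2*pi)) * logsum z (level c R K M (Fin zl)))) (c k) (R k)
           (\<Sum>M\<in>{..N'}. (-1)^M * real (card {w \<in> words K M. inside k (fw w (Fin zl))}))"
      using fw_goodall[OF assms(1) _ assms(2)] by (intro hc_series assms(2)) auto
    then show ?thesis
    proof (rule hc_eq)
      show "(\<Sum>M\<in>{..N'}. (-1)^M * (- (1/(2*pi)) * logsum z (level c R K M (Fin zl)))) = psi_s c R K N' zl z" for z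
        by (simp add: psi_s_def sum_distrib_left algebra_simps)
      show "(\<Sum>M\<in>{..N'}. (-1)^M * real (card {w \<in> words K M. inside k (fw w (Fin zl))})) = S N'"
        unfolding S_def by (intro sum.cong refl) (simp add: cnt_goodall[OF assms] T_def rK)
    qed
  qed
  have "has_circulation (psi_s_star c R K N zl) (c k) (R k) (((real K - 1) * S N + S (Suc N)) / real K)"
    by (rule star_hc[OF base]) (simp add: psi_s_star_def)
  then show ?thesis by (simp add: Sstar)
qed

lemma hc_inf:
  assumes "k \<in> {1..K}"
  shows "has_circulation (psi_inf_star c R K Ginf N) (c k) (R k) (- Ginf / real K)"
proof -
  have ga: "\<forall>i\<in>{1..K}. good i Infty" by (simp add: good_def)
  have base: "has_circulation (psi_inf c R K Ginf N') (c k) (R k) (Ginf * S N')" for N'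
  proof -
    have "has_circulation (\<lambda>z. \<Sum>M\<in>{1..N'}. (Ginf * (-1)^M) * (- (1/(2*pi)) * logsum z (level c R K M Infty))) (c k) (R k)
           (\<Sum>M\<in>{1..N'}. (Ginf * (-1)^M) * real (card {w \<in> words K M. inside k (fw w Infty)}))"
      using fw_goodall[OF ga _ assms] by (intro hc_series assms) auto
    then show ?thesis
    proof (rule hc_eq)
      show "(\<Sum>M\<in>{1..N'}. (Ginf * (-1)^M) * (- (1/(2*pi)) * logsum z (level c R K M Infty))) = psi_inf c R K Ginf N' z" for z
        by (simp add: psi_inf_def sum_distrib_left algebra_simps)
      show "(\<Sum>M\<in>{1..N'}. (Ginf * (-1)^M) * real (card {w \<in> words K M. inside k (fw w Infty)})) = Ginf * S N'"
        unfolding S_from1 sum_distrib_left by (intro sum.cong refl) (simp add: cnt_goodall[OF ga assms] T_def rK)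
    qed
  qed
  have "has_circulation (psi_inf_star c R K Ginf N) (c k) (R k) (((real K - 1) * (Ginf * S N) + Ginf * S (Suc N)) / real K)"
    by (rule star_hc[OF base]) (simp add: psi_inf_star_def)
  moreover have "((real K - 1) * (Ginf * S N) + Ginf * S (Suc N)) / real K = Ginf * (((real K - 1) * S N + S (Suc N)) / real K)"
    by (simp add: algebra_simps add_divide_distrib)
  ultimately show ?thesis by (simp add: Sstar)
qed

lemma hc_c:
  assumes "j \<in> {1..K}" "k \<in> {1..K}" "N \<ge> 1"
  shows "has_circulation (psi_c_star c R K Gcj j N) (c k) (R k) (Gcj * ((if k = j then 2 else 0) - 1 / real K))"
proof -
  define d where "d = (if k = j then 1 else 0::real)"
  have base: "has_circulation (psi_c c R K Gcj j N') (c k) (R k) (Gcj * (\<Sum>M\<le>N'. T M + (if M \<le> 1 then d else 0)))" for N'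
  proof -
    have "has_circulation (\<lambda>z. \<Sum>M\<in>{..N'}. (Gcj * (-1)^M) * (- (1/(2*pi)) * logsum z (level c R K M (Fin (c j))))) (c k) (R k)
           (\<Sum>M\<in>{..N'}. (Gcj * (-1)^M) * real (card {w \<in> words K M. inside k (fw w (Fin (c j)))}))"
      using fw_cj[OF assms(1) _ assms(2)] by (intro hc_series assms(2)) auto
    then show ?thesis
    proof (rule hc_eq)
      show "(\<Sum>M\<in>{..N'}. (Gcj * (-1)^M) * (- (1/(2*pi)) * logsum z (level c R K M (Fin (c j))))) = psi_c c R K Gcj j N' z" for z
        by (simp add: psi_c_def sum_distrib_left algebra_simps)
      show "(\<Sum>M\<in>{..N'}. (Gcj * (-1)^M) * real (card {w \<in> words K M. inside k (fw w (Fin (c j)))})) = Gcj * (\<Sum>M\<le>N'. T M + (if M \<le> 1 then d else 0))"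
        unfolding sum_distrib_left by (intro sum.cong refl) (simp add: mult.assoc term_c[OF assms(1,2)] d_def)
    qed
  qed
  have v: "(\<Sum>M\<le>N'. T M + (if M \<le> 1 then d else 0)) = S N' + 2 * d" if "N' \<ge> 1" for N'
    using sum_le1[OF that, of d] by (simp add: S_def sum.distrib)
  have "has_circulation (psi_c_star c R K Gcj j N) (c k) (R k)
     (((real K - 1) * (Gcj * (\<Sum>M\<le>N. T M + (if M \<le> 1 then d else 0))) + Gcj * (\<Sum>M\<le>Suc N. T M + (if M \<le> 1 then d else 0))) / real K)"
    by (rule star_hc[OF base]) (simp add: psi_c_star_def)
  moreover have "((real K - 1) * (Gcj * (\<Sum>M\<le>N. T M + (if M \<le> 1 then d else 0))) + Gcj * (\<Sum>M\<le>Suc N. T M + (if M \<le> 1 then d else 0))) / real K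
     = Gcj * (((real K - 1) * S N + S (Suc N)) / real K + 2 * d)"
  proof -
    have e1: "(\<Sum>M\<le>N. T M + (if M \<le> 1 then d else 0)) = S N + 2 * d" by (rule v[OF assms(3)])
    have e2: "(\<Sum>M\<le>Suc N. T M + (if M \<le> 1 then d else 0)) = S (Suc N) + 2 * d" by (rule v) simp
    show ?thesis using K1 by (simp only: e1 e2) (simp add: field_simps)
  qed
  ultimately have h: "has_circulation (psi_c_star c R K Gcj j N) (c k) (R k) (Gcj * (((real K - 1) * S N + S (Suc N)) / real K + 2 * d))"
    by (simp only:)
  have e: "Gcj * (((real K - 1) * S N + S (Suc N)) / real K + 2 * d) = Gcj * (- 1 / real K + 2 * d)"
    by (simp only: Sstar)
  show ?thesis by (rule hc_eq[OF h]) (simp_all only: e, simp add: d_def algebra_simps)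
qed

end


lemma Amat_sum:
  assumes "K \<ge> 1" "j \<in> {1..K}"
  shows "(\<Sum>i\<in>{1..K}. Amat K j i * x i) = 2 * x j - (\<Sum>i\<in>{1..K}. x i) / real K"
proof -
  have "Amat K j i * x i = (- 1 / real K) * x i + (if i = j then 2 * x i else 0)" for i
    using assms(1) by (auto simp: Amat_def field_simps)
  then have "(\<Sum>i\<in>{1..K}. Amat K j i * x i) = (\<Sum>i\<in>{1..K}. (- 1 / real K) * x i + (if i = j then 2 * x i else 0))"
    by simp
  also have "\<dots> = (- 1 / real K) * (\<Sum>i\<in>{1..K}. x i) + 2 * x j"
  proof -
    have d: "(\<Sum>i\<in>{1..K}. if i = j then 2 * x i else 0) = 2 * x j" using assms(2) by (simp add: sum.delta)
    have "(\<Sum>i\<in>{1..K}. (- 1 / real K) * x i + (if i = j then 2 * x i else 0))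
       = (\<Sum>i\<in>{1..K}. (- 1 / real K) * x i) + (\<Sum>i\<in>{1..K}. if i = j then 2 * x i else 0)"
      by (rule sum.distrib)
    then show ?thesis by (simp only: d sum_distrib_left[symmetric])
  qed
  finally show ?thesis by simp
qed

theorem mainTheorem9:
  fixes K n :: nat and c :: "nat \<Rightarrow> complex" and R :: "nat \<Rightarrow> real"
    and zs :: "nat \<Rightarrow> complex" and G :: "nat \<Rightarrow> real" and Ginf :: real
    and gamma :: "nat \<Rightarrow> real"
  assumes K2: "K \<ge> 2"
    and Rpos: "\<forall>j\<in>{1..K}. R j > 0"
    and disj: "\<forall>i\<in>{1..K}. \<forall>j\<in>{1..K}. i \<noteq> j \<longrightarrow> cmod (c i - c j) > R i + R j"
    and zsD: "\<forall>l\<in>{1..n}. \<forall>j\<in>{1..K}. cmod (zs l - c j) > R j"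
  defines "b \<equiv> (\<lambda>j. gamma j + (\<Sum>l\<in>{1..n}. G l) / real K + Ginf / real K)"
  shows "\<exists>Gc :: nat \<Rightarrow> real.
           (\<forall>j\<in>{1..K}. (\<Sum>i\<in>{1..K}. Amat K j i * Gc i) = b j)
         \<and> (\<forall>Gc' :: nat \<Rightarrow> real. (\<forall>j\<in>{1..K}. (\<Sum>i\<in>{1..K}. Amat K j i * Gc' i) = b j)
               \<longrightarrow> (\<forall>j\<in>{1..K}. Gc' j = Gc j))
         \<and> (\<forall>N\<ge>1. \<forall>j\<in>{1..K}. has_circulation (Psi c R K n zs G Ginf Gc N) (c j) (R j) (gamma j))"
proof -
  interpret g: geom K c R using K2 Rpos disj by unfold_locales auto
  have K1: "K \<ge> 1" and Kp: "real K > 0" using K2 by auto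
  define s where "s = (\<Sum>l\<in>{1..K}. b l)"
  define Gc where "Gc = (\<lambda>i. (b i + s / real K) / 2)"
  have sumGc: "(\<Sum>i\<in>{1..K}. Gc i) = s"
  proof -
    have "(\<Sum>i\<in>{1..K}. Gc i) = (\<Sum>i\<in>{1..K}. b i / 2 + s / real K / 2)" by (simp add: Gc_def add_divide_distrib)
    also have "\<dots> = s / 2 + real K * (s / real K / 2)" by (simp add: sum.distrib s_def sum_divide_distrib)
    also have "\<dots> = s" using Kp by simp
    finally show ?thesis .
  qed
  have eqGc: "(\<Sum>i\<in>{1..K}. Amat K j i * Gc i) = b j" if "j \<in> {1..K}" for j
    using Amat_sum[OF K1 that, of Gc] sumGc by (simp add: Gc_def field_simps)
  have uniq: "\<forall>j\<in>{1..K}. Gc' j = Gc j" if h: "\<forall>j\<in>{1..K}. (\<Sum>i\<in>{1..K}. Amat K j i * Gc' i) = b j" for Gc'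
  proof -
    define Y where "Y = (\<Sum>i\<in>{1..K}. Gc' i)"
    have e: "2 * Gc' j - Y / real K = b j" if "j \<in> {1..K}" for j
      using h Amat_sum[OF K1 that, of Gc'] that Y_def by simp
    have "(\<Sum>j\<in>{1..K}. 2 * Gc' j - Y / real K) = s" using e s_def by simp
    then have "2 * Y - real K * (Y / real K) = s" by (simp add: sum_subtractf sum_distrib_left[symmetric] Y_def)
    then have "Y = s" using Kp by simp
    then show ?thesis using e by (auto simp: Gc_def field_simps)
  qed
  have circ: "has_circulation (Psi c R K n zs G Ginf Gc N) (c k) (R k) (gamma k)" if N: "N \<ge> 1" and k: "k \<in> {1..K}" for N k
  proof -
    have h1: "has_circulation (\<lambda>z. \<Sum>l\<in>{1..n}. G l * psi_s_star c R K N (zs l) z) (c k) (R k) (\<Sum>l\<in>{1..n}. G l * (-1 / real K))"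
    proof (rule hc_sum)
      fix l assume l: "l \<in> {1..n}"
      have "\<forall>i\<in>{1..K}. g.good i (Fin (zs l))" using zsD l by (simp add: g.good_def)
      then show "has_circulation (\<lambda>z. G l * psi_s_star c R K N (zs l) z) (c k) (R k) (G l * (-1 / real K))"
        by (intro hc_scale g.hc_s k)
    qed simp
    have h2: "has_circulation (\<lambda>z. \<Sum>j\<in>{1..K}. psi_c_star c R K (Gc j) j N z) (c k) (R k)
        (\<Sum>j\<in>{1..K}. Gc j * ((if k = j then 2 else 0) - 1 / real K))"
      by (intro hc_sum g.hc_c k N) auto
    note h3 = g.hc_inf[OF k, of Ginf N]
    have v2: "(\<Sum>j\<in>{1..K}. Gc j * ((if k = j then 2 else 0) - 1 / real K)) = b k"
    proof -
      have "(\<Sum>j\<in>{1..K}. Gc j * ((if k = j then 2 else 0) - 1 / real K)) = (\<Sum>j\<in>{1..K}. (if k = j then 2 * Gc j else 0) - (1 / real K) * Gc j)"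
        by (intro sum.cong) (auto simp: algebra_simps)
      also have "\<dots> = 2 * Gc k - s / real K" using k sumGc by (simp add: sum_subtractf sum_divide_distrib[symmetric])
      also have "\<dots> = b k" using Amat_sum[OF K1 k, of Gc] eqGc[OF k] sumGc by simp
      finally show ?thesis .
    qed
    have "has_circulation (\<lambda>z. (\<Sum>l\<in>{1..n}. G l * psi_s_star c R K N (zs l) z) + psi_inf_star c R K Ginf N z
        + (\<Sum>j\<in>{1..K}. psi_c_star c R K (Gc j) j N z)) (c k) (R k)
        ((\<Sum>l\<in>{1..n}. G l * (-1 / real K)) + - Ginf / real K + (\<Sum>j\<in>{1..K}. Gc j * ((if k = j then 2 else 0) - 1 / real K)))"
      by (intro hc_add h1 h2 h3)
    then show ?thesis
    proof (rule hc_eq)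
      show "(\<Sum>l\<in>{1..n}. G l * psi_s_star c R K N (zs l) z) + psi_inf_star c R K Ginf N z
        + (\<Sum>j\<in>{1..K}. psi_c_star c R K (Gc j) j N z) = Psi c R K n zs G Ginf Gc N z" for z
        by (simp add: Psi_def)
      show "(\<Sum>l\<in>{1..n}. G l * (-1 / real K)) + - Ginf / real K + (\<Sum>j\<in>{1..K}. Gc j * ((if k = j then 2 else 0) - 1 / real K)) = gamma k"
        unfolding v2 b_def by (simp add: sum_negf sum_divide_distrib[symmetric])
    qed
  qed
  show ?thesis using eqGc uniq circ by blast
qed

end
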